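(* Let $\mathbb{F}$ be a field and let $n>4$ be an integer. Then for each $p\in\{0,\ldots,n-3\}$ there exists a unital $\mathbb{F}$-algebra $\mathcal{A}$ with $\dim\mathcal{A}=n$ and $l(\mathcal{A})=2^{n-3}+2^{p}$.
   Context: All algebras are finite-dimensional, unital, not necessarily associative algebras over the field $\mathbb{F}$. For a finite generating set $S$ of an algebra $\mathcal{A}$, a word in $S$ is any product (with any bracketing) of finitely many elements of $S$; its length is the number of factors, and the unit $1$ is regarded as a word of length $0$. Let $L_i(S)$ denote the linear span of all words in $S$ of length at most $i$ (so $L_0(S)=\mathbb{F}$). The length of $S$ is $l(S)=\min\{k\ge 0: L_k(S)=\mathcal{A}\}$, and the length of $\mathcal{A}$ is $l(\mathcal{A})=\max\{l(S): S \text{ a finite generating set of } \mathcal{A}\}$. *)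

theory Defs
  imports Main
begin

text \<open>An n-dimensional (not necessarily associative) algebra over a field 'a is modelled
  on the coordinate space of functions nat => 'a vanishing outside {0..<n}, with
  multiplication given by structure constants c i j k (e_i * e_j = sum_k c i j k e_k).
  Every n-dimensional algebra is isomorphic to one of these.\<close>

definition carrier_vs :: "nat \<Rightarrow> (nat \<Rightarrow> 'a::zero) set" where
  "carrier_vs n = {x. \<forall>k\<ge>n. x k = 0}"

definition amult :: "nat \<Rightarrow> (nat \<Rightarrow> nat \<Rightarrow> nat \<Rightarrow> 'a::field) \<Rightarrow> (nat \<Rightarrow> 'a) \<Rightarrow> (nat \<Rightarrow> 'a) \<Rightarrow> (nat \<Rightarrow> 'a)" where
  "amult n c x y = (\<lambda>k. if k < n then (\<Sum>i<n. \<Sum>j<n. x i * y j * c i j k) else 0)"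

definition is_unit :: "nat \<Rightarrow> (nat \<Rightarrow> nat \<Rightarrow> nat \<Rightarrow> 'a::field) \<Rightarrow> (nat \<Rightarrow> 'a) \<Rightarrow> bool" where
  "is_unit n c e \<longleftrightarrow> e \<in> carrier_vs n \<and>
     (\<forall>x\<in>carrier_vs n. amult n c e x = x \<and> amult n c x e = x)"

definition unital :: "nat \<Rightarrow> (nat \<Rightarrow> nat \<Rightarrow> nat \<Rightarrow> 'a::field) \<Rightarrow> bool" where
  "unital n c \<longleftrightarrow> (\<exists>e. is_unit n c e)"

definition one_elem :: "nat \<Rightarrow> (nat \<Rightarrow> nat \<Rightarrow> nat \<Rightarrow> 'a::field) \<Rightarrow> (nat \<Rightarrow> 'a)" where
  "one_elem n c = (THE e. is_unit n c e)"

inductive word :: "nat \<Rightarrow> (nat \<Rightarrow> nat \<Rightarrow> nat \<Rightarrow> 'a::field) \<Rightarrow> (nat \<Rightarrow> 'a) set \<Rightarrow> nat \<Rightarrow> (nat \<Rightarrow> 'a) \<Rightarrow> bool"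
  for n c S where
  word_one: "word n c S 0 (one_elem n c)"
| word_gen: "s \<in> S \<Longrightarrow> word n c S 1 s"
| word_mult: "word n c S i a \<Longrightarrow> word n c S j b \<Longrightarrow> word n c S (i + j) (amult n c a b)"

definition lin_span :: "(nat \<Rightarrow> 'a::field) set \<Rightarrow> (nat \<Rightarrow> 'a) set" where
  "lin_span W = {v. \<exists>T f. finite T \<and> T \<subseteq> W \<and> v = (\<lambda>k. \<Sum>w\<in>T. f w * w k)}"

definition Lspan :: "nat \<Rightarrow> (nat \<Rightarrow> nat \<Rightarrow> nat \<Rightarrow> 'a::field) \<Rightarrow> (nat \<Rightarrow> 'a) set \<Rightarrow> nat \<Rightarrow> (nat \<Rightarrow> 'a) set" where
  "Lspan n c S i = lin_span {w. \<exists>j\<le>i. word n c S j w}"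

definition generates :: "nat \<Rightarrow> (nat \<Rightarrow> nat \<Rightarrow> nat \<Rightarrow> 'a::field) \<Rightarrow> (nat \<Rightarrow> 'a) set \<Rightarrow> bool" where
  "generates n c S \<longleftrightarrow> finite S \<and> S \<subseteq> carrier_vs n \<and> (\<exists>k. Lspan n c S k = carrier_vs n)"

definition set_length :: "nat \<Rightarrow> (nat \<Rightarrow> nat \<Rightarrow> nat \<Rightarrow> 'a::field) \<Rightarrow> (nat \<Rightarrow> 'a) set \<Rightarrow> nat" where
  "set_length n c S = (LEAST k. Lspan n c S k = carrier_vs n)"

definition alg_length_is :: "nat \<Rightarrow> (nat \<Rightarrow> nat \<Rightarrow> nat \<Rightarrow> 'a::field) \<Rightarrow> nat \<Rightarrow> bool" where
  "alg_length_is n c m \<longleftrightarrow>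
     (\<exists>S. generates n c S \<and> set_length n c S = m) \<and>
     (\<forall>S. generates n c S \<longrightarrow> set_length n c S \<le> m)"

end

theory Submission
  imports Defs
begin


lemma span_base: "w \<in> W \<Longrightarrow> w \<in> lin_span W"
  unfolding lin_span_def
  by (rule CollectI, rule exI[of _ "{w}"], rule exI[of _ "\<lambda>_. 1"]) auto

lemma span_zero: "(\<lambda>k. 0) \<in> lin_span W"
  unfolding lin_span_def by (rule CollectI, rule exI[of _ "{}"]) auto

lemma span_add:
  assumes "x \<in> lin_span W" "y \<in> lin_span W"
  shows "(\<lambda>k. x k + y k) \<in> lin_span W"
proof -
  obtain T1 f1 where 1: "finite T1" "T1 \<subseteq> W" "x = (\<lambda>k. \<Sum>w\<in>T1. f1 w * w k)"
    using assms(1) unfolding lin_span_def by (auto simp only: mem_Collect_eq)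
  obtain T2 f2 where 2: "finite T2" "T2 \<subseteq> W" "y = (\<lambda>k. \<Sum>w\<in>T2. f2 w * w k)"
    using assms(2) unfolding lin_span_def by (auto simp only: mem_Collect_eq)
  define g where "g w = (if w \<in> T1 then f1 w else 0) + (if w \<in> T2 then f2 w else 0)" for w
  have "(\<lambda>k. x k + y k) = (\<lambda>k. \<Sum>w\<in>T1 \<union> T2. g w * w k)"
  proof
    fix k
    have a: "(\<Sum>w\<in>T1. f1 w * w k) = (\<Sum>w\<in>T1 \<union> T2. (if w \<in> T1 then f1 w else 0) * w k)"
      by (rule sum.mono_neutral_cong_left) (use 1 2 in auto)
    have b: "(\<Sum>w\<in>T2. f2 w * w k) = (\<Sum>w\<in>T1 \<union> T2. (if w \<in> T2 then f2 w else 0) * w k)"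
      by (rule sum.mono_neutral_cong_left) (use 1 2 in auto)
    show "x k + y k = (\<Sum>w\<in>T1 \<union> T2. g w * w k)"
      unfolding 1(3) 2(3) a b g_def by (simp add: distrib_right sum.distrib)
  qed
  then show ?thesis unfolding lin_span_def using 1(1,2) 2(1,2)
    by (intro CollectI exI[of _ "T1 \<union> T2"] exI[of _ g]) simp
qed

lemma span_smult:
  assumes "x \<in> lin_span W"
  shows "(\<lambda>k. a * x k) \<in> lin_span W"
proof -
  obtain T1 f1 where 1: "finite T1" "T1 \<subseteq> W" "x = (\<lambda>k. \<Sum>w\<in>T1. f1 w * w k)"
    using assms(1) unfolding lin_span_def by (auto simp only: mem_Collect_eq)
  have "(\<lambda>k. a * x k) = (\<lambda>k. \<Sum>w\<in>T1. (a * f1 w) * w k)"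
    unfolding 1(3) by (simp add: sum_distrib_left mult.assoc)
  then show ?thesis unfolding lin_span_def using 1(1,2) by (auto simp only: mem_Collect_eq)
qed

lemma span_sum:
  assumes "finite I" "\<And>i. i \<in> I \<Longrightarrow> g i \<in> lin_span W"
  shows "(\<lambda>k. \<Sum>i\<in>I. h i * g i k) \<in> lin_span W"
  using assms
proof (induction I rule: finite_induct)
  case empty
  then show ?case using span_zero by simp
next
  case (insert x F)
  have "(\<lambda>k. h x * g x k + (\<Sum>i\<in>F. h i * g i k)) \<in> lin_span W"
    using span_add[OF span_smult[of "g x" W "h x"] insert.IH] insert.prems by auto
  then show ?case using insert.hyps by simp
qed

lemma span_carrier:
  assumes "W \<subseteq> carrier_vs n" "x \<in> lin_span W"
  shows "x \<in> carrier_vs n"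
proof -
  obtain T1 f1 where 1: "finite T1" "T1 \<subseteq> W" "x = (\<lambda>k. \<Sum>w\<in>T1. f1 w * w k)"
    using assms(2) unfolding lin_span_def by (auto simp only: mem_Collect_eq)
  have "x k = 0" if "k \<ge> n" for k
  proof -
    have "w k = 0" if "w \<in> T1" for w
      using that 1(2) assms(1) \<open>k \<ge> n\<close> unfolding carrier_vs_def by auto
    then show ?thesis unfolding 1(3) by (auto intro: sum.neutral)
  qed
  then show ?thesis unfolding carrier_vs_def by simp
qed

lemma span_mono:
  assumes "W \<subseteq> W'" shows "lin_span W \<subseteq> lin_span W'"
proof
  fix x assume "x \<in> lin_span W"
  then obtain T1 f1 where 1: "finite T1" "T1 \<subseteq> W" "x = (\<lambda>k. \<Sum>w\<in>T1. f1 w * w k)"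
    unfolding lin_span_def by (auto simp only: mem_Collect_eq)
  show "x \<in> lin_span W'" unfolding lin_span_def using 1 assms
    by (intro CollectI exI[of _ T1] exI[of _ f1]) simp
qed

lemma amult_sum_left:
  "amult n c (\<lambda>k. \<Sum>w\<in>T. f w * w k) y = (\<lambda>k. \<Sum>w\<in>T. f w * amult n c w y k)"
proof
  fix k
  show "amult n c (\<lambda>k. \<Sum>w\<in>T. f w * w k) y k = (\<Sum>w\<in>T. f w * amult n c w y k)"
  proof (cases "k < n")
    case True
    have "(\<Sum>i<n. \<Sum>j<n. (\<Sum>w\<in>T. f w * w i) * y j * c i j k)
        = (\<Sum>i<n. \<Sum>j<n. \<Sum>w\<in>T. f w * (w i * y j * c i j k))"
      by (simp add: sum_distrib_right mult.assoc)
    also have "\<dots> = (\<Sum>i<n. \<Sum>w\<in>T. \<Sum>j<n. f w * (w i * y j * c i j k))"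
      by (rule sum.cong[OF refl], rule sum.swap)
    also have "\<dots> = (\<Sum>w\<in>T. \<Sum>i<n. \<Sum>j<n. f w * (w i * y j * c i j k))"
      by (rule sum.swap)
    also have "\<dots> = (\<Sum>w\<in>T. f w * (\<Sum>i<n. \<Sum>j<n. w i * y j * c i j k))"
      by (simp only: sum_distrib_left)
    finally show ?thesis using True by (simp add: amult_def)
  qed (simp add: amult_def)
qed

lemma amult_sum_right:
  "amult n c x (\<lambda>k. \<Sum>w\<in>T. f w * w k) = (\<lambda>k. \<Sum>w\<in>T. f w * amult n c x w k)"
proof
  fix k
  show "amult n c x (\<lambda>k. \<Sum>w\<in>T. f w * w k) k = (\<Sum>w\<in>T. f w * amult n c x w k)"
  proof (cases "k < n")
    case True
    have "(\<Sum>i<n. \<Sum>j<n. x i * (\<Sum>w\<in>T. f w * w j) * c i j k)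
        = (\<Sum>i<n. \<Sum>j<n. \<Sum>w\<in>T. f w * (x i * w j * c i j k))"
      by (simp add: sum_distrib_right sum_distrib_left ac_simps)
    also have "\<dots> = (\<Sum>i<n. \<Sum>w\<in>T. \<Sum>j<n. f w * (x i * w j * c i j k))"
      by (rule sum.cong[OF refl], rule sum.swap)
    also have "\<dots> = (\<Sum>w\<in>T. \<Sum>i<n. \<Sum>j<n. f w * (x i * w j * c i j k))"
      by (rule sum.swap)
    also have "\<dots> = (\<Sum>w\<in>T. f w * (\<Sum>i<n. \<Sum>j<n. x i * w j * c i j k))"
      by (simp only: sum_distrib_left)
    finally show ?thesis using True by (simp add: amult_def)
  qed (simp add: amult_def)
qed

lemma Lspan_mono: "i \<le> j \<Longrightarrow> Lspan n c S i \<subseteq> Lspan n c S j"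
  unfolding Lspan_def
proof (rule span_mono, rule subsetI)
  fix x assume "i \<le> j" "x \<in> {w. \<exists>j\<le>i. word n c S j w}"
  then obtain a where "a \<le> i" "word n c S a x" by auto
  then show "x \<in> {w. \<exists>ja\<le>j. word n c S ja w}" using \<open>i \<le> j\<close>
    by (intro CollectI exI[of _ a]) simp
qed

lemma word_in_Lspan: "word n c S j w \<Longrightarrow> j \<le> i \<Longrightarrow> w \<in> Lspan n c S i"
  unfolding Lspan_def by (rule span_base) auto

lemma Lspan_mult:
  assumes "x \<in> Lspan n c S i" "y \<in> Lspan n c S j"
  shows "amult n c x y \<in> Lspan n c S (i + j)"
proof -
  obtain T1 f1 where 1: "finite T1" "T1 \<subseteq> {w. \<exists>a\<le>i. word n c S a w}" "x = (\<lambda>k. \<Sum>w\<in>T1. f1 w * w k)"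
    using assms(1) unfolding lin_span_def Lspan_def by (auto simp only: mem_Collect_eq)
  obtain T2 f2 where 2: "finite T2" "T2 \<subseteq> {w. \<exists>b\<le>j. word n c S b w}" "y = (\<lambda>k. \<Sum>w\<in>T2. f2 w * w k)"
    using assms(2) unfolding lin_span_def Lspan_def by (auto simp only: mem_Collect_eq)
  have "amult n c w y \<in> Lspan n c S (i + j)" if wT: "w \<in> T1" for w
  proof -
    obtain a where a: "a \<le> i" "word n c S a w" using 1(2) wT by auto
    have "amult n c w y = (\<lambda>k. \<Sum>w'\<in>T2. f2 w' * amult n c w w' k)"
      unfolding 2(3) by (rule amult_sum_right)
    also have "\<dots> \<in> Lspan n c S (i + j)"
      unfolding Lspan_def
    proof (rule span_sum[OF 2(1)])
      fix w' assume "w' \<in> T2"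
      then obtain b where b: "b \<le> j" "word n c S b w'" using 2(2) by auto
      have "word n c S (a + b) (amult n c w w')" by (rule word_mult[OF a(2) b(2)])
      then show "amult n c w w' \<in> lin_span {w. \<exists>j'\<le>i + j. word n c S j' w}"
        using a(1) b(1) by (intro span_base CollectI exI[of _ "a + b"]) simp
    qed
    finally show ?thesis .
  qed
  then have "(\<lambda>k. \<Sum>w\<in>T1. f1 w * amult n c w y k) \<in> Lspan n c S (i + j)"
    unfolding Lspan_def by (intro span_sum[OF 1(1)]) (auto simp: Lspan_def)
  then show ?thesis unfolding 1(3) amult_sum_left .
qed




definition cc :: "nat \<Rightarrow> nat \<Rightarrow> nat \<Rightarrow> nat \<Rightarrow> nat \<Rightarrow> 'a::field" where
  "cc n p i j k = (if i = 0 then (if j = k then 1 else 0)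
     else if j = 0 then (if i = k then 1 else 0)
     else if i = j \<and> i \<le> n - 3 \<and> k = Suc i then 1
     else if i = n - 2 \<and> j = Suc p \<and> k = n - 1 then 1 else 0)"

definition bvec :: "nat \<Rightarrow> nat \<Rightarrow> 'a::field" where
  "bvec j = (\<lambda>k. if k = j then 1 else 0)"

lemma double_delta:
  fixes F :: "nat \<Rightarrow> nat \<Rightarrow> 'a::field"
  assumes "\<And>i j. i < n \<Longrightarrow> j < n \<Longrightarrow> F i j = (if i = a \<and> j = b then X else 0)" "a < n" "b < n"
  shows "(\<Sum>i<n. \<Sum>j<n. F i j) = X"
proof -
  have "(\<Sum>i<n. \<Sum>j<n. F i j) = (\<Sum>i<n. \<Sum>j<n. (if i = a then (if j = b then X else 0) else 0))"
    using assms(1) by (intro sum.cong refl) auto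
  also have "\<dots> = (\<Sum>i<n. (if i = a then X else 0))"
    by (rule sum.cong[OF refl]) (use assms(3) in simp)
  also have "\<dots> = X" using assms(2) by simp
  finally show ?thesis .
qed

lemma double_zero:
  fixes F :: "nat \<Rightarrow> nat \<Rightarrow> 'a::field"
  assumes "\<And>i j. i < n \<Longrightarrow> j < n \<Longrightarrow> F i j = 0"
  shows "(\<Sum>i<n. \<Sum>j<n. F i j) = 0"
  using assms by (intro sum.neutral ballI) auto

lemma bvec_carrier: "j < n \<Longrightarrow> bvec j \<in> carrier_vs n"
  unfolding bvec_def carrier_vs_def by auto

lemma amult_carrier: "amult n c x y \<in> carrier_vs n"
  unfolding amult_def carrier_vs_def by auto

locale setting =
  fixes n p :: nat
  assumes n4: "n > 4" and pn: "p \<le> n - 3"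
begin

lemma unit_e0: "is_unit n (cc n p) (bvec 0 :: nat \<Rightarrow> 'a::field)"
  unfolding is_unit_def
proof (intro conjI ballI)
  show "bvec 0 \<in> carrier_vs n" using n4 by (intro bvec_carrier) simp
next
  fix x :: "nat \<Rightarrow> 'a" assume x: "x \<in> carrier_vs n"
  show "amult n (cc n p) (bvec 0) x = x"
  proof
    fix k
    show "amult n (cc n p) (bvec 0) x k = x k"
    proof (cases "k < n")
      case True
      have "(\<Sum>i<n. \<Sum>j<n. bvec 0 i * x j * cc n p i j k) = x k"
        by (rule double_delta[where a = 0 and b = k]) (use True n4 in \<open>auto simp: bvec_def cc_def\<close>)
      then show ?thesis using True by (simp add: amult_def)
    qed (use x in \<open>simp add: amult_def carrier_vs_def\<close>)
  qed
  show "amult n (cc n p) x (bvec 0) = x"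
  proof
    fix k
    show "amult n (cc n p) x (bvec 0) k = x k"
    proof (cases "k < n")
      case True
      have "(\<Sum>i<n. \<Sum>j<n. x i * bvec 0 j * cc n p i j k) = x k"
        by (rule double_delta[where a = k and b = 0]) (use True n4 in \<open>auto simp: bvec_def cc_def\<close>)
      then show ?thesis using True by (simp add: amult_def)
    qed (use x in \<open>simp add: amult_def carrier_vs_def\<close>)
  qed
qed

lemma one_e0: "one_elem n (cc n p) = (bvec 0 :: nat \<Rightarrow> 'a::field)"
  unfolding one_elem_def
proof (rule the_equality)
  show "is_unit n (cc n p) (bvec 0 :: nat \<Rightarrow> 'a)" by (rule unit_e0)
next
  fix e :: "nat \<Rightarrow> 'a" assume e: "is_unit n (cc n p) e"
  have "amult n (cc n p) e (bvec 0) = bvec 0" using e unit_e0 unfolding is_unit_def by blast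
  moreover have "amult n (cc n p) e (bvec 0) = e" using e unit_e0 unfolding is_unit_def by blast
  ultimately show "e = bvec 0" by simp
qed

lemma unital_cc: "unital n (cc n p :: nat \<Rightarrow> nat \<Rightarrow> nat \<Rightarrow> 'a::field)"
  unfolding unital_def using unit_e0 by blast

definition wt :: "nat \<Rightarrow> nat" where
  "wt k = (if k = 0 then 0 else if k \<le> n - 2 then 2 ^ (k - 1) else 2 ^ (n - 3) + 2 ^ p)"

lemma grading:
  assumes "(cc n p i j k :: 'a::field) \<noteq> 0"
  shows "wt k = wt i + wt j"
proof -
  consider "i = 0" "j = k" | "i \<noteq> 0" "j = 0" "i = k"
    | "i \<noteq> 0" "j \<noteq> 0" "i = j" "i \<le> n - 3" "k = Suc i"
    | "i \<noteq> 0" "j \<noteq> 0" "i = n - 2" "j = Suc p" "k = n - 1"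
    using assms unfolding cc_def by (auto split: if_splits)
  then show ?thesis
  proof cases
    case 1 then show ?thesis by (simp add: wt_def)
  next
    case 2 then show ?thesis by (simp add: wt_def)
  next
    case 3
    then obtain i' where i': "i = Suc i'" by (cases i) auto
    have e: "j = Suc i'" "k = Suc (Suc i')" "Suc i' \<le> n - 3" using 3 i' by auto
    show ?thesis unfolding e i' using e(3) n4 by (simp add: wt_def)
  next
    case 4
    have "Suc p \<le> n - 2" "\<not> n - 1 \<le> n - 2" "n - 2 \<noteq> 0" "n - 2 \<le> n - 2" using n4 pn by arith+
    then show ?thesis using 4 by (simp add: wt_def)
  qed
qed

definition mm :: nat where "mm = 2 ^ (n - 3) + 2 ^ p"

lemma word_weight:
  assumes "word n (cc n p) {bvec 1 :: nat \<Rightarrow> 'a::field} i w"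
  shows "\<And>k. w k \<noteq> 0 \<Longrightarrow> k < n \<and> wt k = i"
  using assms
proof (induction rule: word.induct)
  case word_one
  then show ?case using n4 by (auto simp: one_e0 bvec_def wt_def split: if_splits)
next
  case (word_gen s)
  then show ?case using n4 by (auto simp: bvec_def wt_def split: if_splits)
next
  case (word_mult i a j b k)
  have kn: "k < n" using word_mult.prems by (auto simp: amult_def split: if_splits)
  then have "(\<Sum>i'<n. \<Sum>j'<n. a i' * b j' * cc n p i' j' k) \<noteq> 0"
    using word_mult.prems by (simp add: amult_def)
  then obtain i' where "i' < n" "(\<Sum>j'<n. a i' * b j' * cc n p i' j' k) \<noteq> 0"
    by (meson lessThan_iff sum.not_neutral_contains_not_neutral)
  then obtain j' where "j' < n" "a i' * b j' * cc n p i' j' k \<noteq> 0"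
    by (meson lessThan_iff sum.not_neutral_contains_not_neutral)
  then have "a i' \<noteq> 0" "b j' \<noteq> 0" "cc n p i' j' k \<noteq> (0::'a)" by auto
  then show ?case using word_mult.IH grading kn by fastforce
qed

lemma lower_bound:
  assumes "k < mm"
  shows "Lspan n (cc n p) {bvec 1 :: nat \<Rightarrow> 'a::field} k \<noteq> carrier_vs n"
proof
  assume eq: "Lspan n (cc n p) {bvec 1 :: nat \<Rightarrow> 'a::field} k = carrier_vs n"
  have "bvec (n - 1) \<in> carrier_vs n" using n4 by (intro bvec_carrier) simp
  then have "bvec (n - 1) \<in> Lspan n (cc n p) {bvec 1 :: nat \<Rightarrow> 'a::field} k" using eq by simp
  then have "\<exists>T f. finite T \<and> T \<subseteq> {w. \<exists>j\<le>k. word n (cc n p) {bvec 1 :: nat \<Rightarrow> 'a} j w} \<and>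
      bvec (n - 1) = (\<lambda>l. \<Sum>w\<in>T. f w * w l)"
    unfolding Lspan_def lin_span_def by (simp only: mem_Collect_eq)
  then obtain T f where T: "finite T" "T \<subseteq> {w. \<exists>j\<le>k. word n (cc n p) {bvec 1 :: nat \<Rightarrow> 'a} j w}"
      "bvec (n - 1) = (\<lambda>l. \<Sum>w\<in>T. f w * w l)"
    by (elim exE conjE) 
  have "w (n - 1) = 0" if wT: "w \<in> T" for w
  proof (rule ccontr)
    assume ne: "w (n - 1) \<noteq> 0"
    obtain j where "j \<le> k" "word n (cc n p) {bvec 1 :: nat \<Rightarrow> 'a} j w" using T(2) wT by auto
    then have "wt (n - 1) = j" using word_weight ne by blast
    moreover have "wt (n - 1) = mm" using n4 by (simp add: wt_def mm_def)
    ultimately show False using assms \<open>j \<le> k\<close> by simp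
  qed
  then have "(\<Sum>w\<in>T. f w * w (n - 1)) = 0" by (auto intro: sum.neutral)
  moreover have "bvec (n - 1) (n - 1) = (1::'a)" by (simp add: bvec_def)
  ultimately show False using fun_cong[OF T(3), of "n - 1"] by simp
qed

end



fun pw :: "nat \<Rightarrow> (nat \<Rightarrow> nat \<Rightarrow> nat \<Rightarrow> 'a::field) \<Rightarrow> (nat \<Rightarrow> 'a) \<Rightarrow> nat \<Rightarrow> (nat \<Rightarrow> 'a)" where
  "pw n c t 0 = t"
| "pw n c t (Suc i) = amult n c (pw n c t i) (pw n c t i)"

lemma pw_Lspan:
  assumes "t \<in> Lspan n c S 1"
  shows "pw n c t i \<in> Lspan n c S (2 ^ i)"
proof (induction i)
  case 0 then show ?case using assms by simp
next
  case (Suc i)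
  have "amult n c (pw n c t i) (pw n c t i) \<in> Lspan n c S (2 ^ i + 2 ^ i)"
    by (rule Lspan_mult[OF Suc Suc])
  then show ?case by (simp add: mult_2)
qed

context setting
begin

lemma words_coord1:
  assumes "\<forall>s\<in>S. s 1 = (0::'a::field)" "word n (cc n p) S i w"
  shows "w 1 = 0"
  using assms(2)
proof (induction rule: word.induct)
  case word_one then show ?case by (simp add: one_e0 bvec_def)
next
  case (word_gen s) then show ?case using assms(1) by simp
next
  case (word_mult i a j b)
  have "(\<Sum>i'<n. \<Sum>j'<n. a i' * b j' * cc n p i' j' 1) = 0"
  proof (rule double_zero)
    fix i' j' assume "i' < n" "j' < n"
    show "a i' * b j' * cc n p i' j' 1 = 0"
      using word_mult.IH n4 by (auto simp: cc_def)
  qed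
  then show ?case by (simp add: amult_def)
qed

lemma gen_coord1:
  assumes "generates n (cc n p) (S :: (nat \<Rightarrow> 'a::field) set)"
  shows "\<exists>s\<in>S. s 1 \<noteq> 0"
proof (rule ccontr)
  assume "\<not> (\<exists>s\<in>S. s 1 \<noteq> 0)"
  then have z: "\<forall>s\<in>S. s 1 = 0" by simp
  obtain k where k: "Lspan n (cc n p) S k = carrier_vs n" using assms unfolding generates_def by blast
  have "bvec 1 \<in> carrier_vs n" using n4 by (intro bvec_carrier) simp
  then have "bvec 1 \<in> Lspan n (cc n p) S k" using k by simp
  then have "\<exists>T f. finite T \<and> T \<subseteq> {w. \<exists>j\<le>k. word n (cc n p) S j w} \<and>
      bvec 1 = (\<lambda>l. \<Sum>w\<in>T. f w * w l)"
    unfolding Lspan_def lin_span_def by (simp only: mem_Collect_eq)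
  then obtain T f where T: "finite T" "T \<subseteq> {w. \<exists>j\<le>k. word n (cc n p) S j w}"
      "bvec 1 = (\<lambda>l. \<Sum>w\<in>T. f w * w l)"
    by (elim exE conjE)
  have "w 1 = 0" if wT: "w \<in> T" for w
  proof -
    obtain j where "word n (cc n p) S j w" using T(2) wT by auto
    then show ?thesis using words_coord1[OF z] by blast
  qed
  then have "(\<Sum>w\<in>T. f w * w 1) = 0" by (auto intro: sum.neutral)
  moreover have "bvec 1 1 = (1::'a)" by (simp add: bvec_def)
  ultimately show False using fun_cong[OF T(3), of 1] by simp
qed

lemma sq_lemma:
  fixes x :: "nat \<Rightarrow> 'a::field"
  assumes "1 \<le> q" "q \<le> n - 3" "\<And>i. i < q \<Longrightarrow> x i = 0"
  shows "\<And>l. l \<le> q \<Longrightarrow> amult n (cc n p) x x l = 0"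
    and "amult n (cc n p) x x (Suc q) = x q * x q"
proof -
  fix l assume l: "l \<le> q"
  have "(\<Sum>i<n. \<Sum>j<n. x i * x j * cc n p i j l) = 0"
  proof (rule double_zero)
    fix i j assume "i < n" "j < n"
    show "x i * x j * cc n p i j l = 0"
    proof (cases "i < q \<or> j < q")
      case True then show ?thesis using assms(3) by auto
    next
      case False
      then show ?thesis using assms(1,2) l n4 by (auto simp: cc_def)
    qed
  qed
  then show "amult n (cc n p) x x l = 0" by (simp add: amult_def)
next
  have "(\<Sum>i<n. \<Sum>j<n. x i * x j * cc n p i j (Suc q)) = x q * x q"
  proof (rule double_delta[where a = q and b = q])
    fix i j assume "i < n" "j < n"
    show "x i * x j * cc n p i j (Suc q) = (if i = q \<and> j = q then x q * x q else 0)"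
    proof (cases "i < q \<or> j < q")
      case True then show ?thesis using assms(3) by auto
    next
      case False
      then show ?thesis using assms(1,2) n4 by (auto simp: cc_def)
    qed
  qed (use assms n4 in auto)
  moreover have "Suc q < n" using assms(2) n4 by arith
  ultimately show "amult n (cc n p) x x (Suc q) = x q * x q" by (simp add: amult_def)
qed

lemma pw_support:
  fixes t :: "nat \<Rightarrow> 'a::field"
  assumes "t 0 = 0" "i \<le> n - 3"
  shows "(\<forall>l\<le>i. pw n (cc n p) t i l = 0) \<and> pw n (cc n p) t i (Suc i) = t 1 ^ (2 ^ i)"
  using assms(2)
proof (induction i)
  case 0 then show ?case using assms(1) by simp
next
  case (Suc i)
  then have IH: "\<forall>l\<le>i. pw n (cc n p) t i l = 0" "pw n (cc n p) t i (Suc i) = t 1 ^ (2 ^ i)" by auto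
  have h: "\<And>l. l < Suc i \<Longrightarrow> pw n (cc n p) t i l = 0" using IH(1) by auto
  note sq = sq_lemma[of "Suc i" "pw n (cc n p) t i", OF _ Suc.prems h]
  have "pw n (cc n p) t (Suc i) (Suc (Suc i)) = t 1 ^ (2 ^ i) * t 1 ^ (2 ^ i)"
    using sq(2) IH(2) by simp
  also have "\<dots> = t 1 ^ (2 ^ Suc i)" by (simp add: power_add[symmetric] mult_2)
  finally show ?case using sq(1) by simp
qed

lemma top_prod:
  fixes u v :: "nat \<Rightarrow> 'a::field"
  assumes "\<And>i. i < n - 2 \<Longrightarrow> u i = 0" "\<And>j. j < Suc p \<Longrightarrow> v j = 0"
  shows "amult n (cc n p) u v = (\<lambda>l. (u (n - 2) * v (Suc p)) * bvec (n - 1) l)"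
proof
  fix l
  show "amult n (cc n p) u v l = (u (n - 2) * v (Suc p)) * bvec (n - 1) l"
  proof (cases "l < n")
    case True
    have "(\<Sum>i<n. \<Sum>j<n. u i * v j * cc n p i j l) = (u (n - 2) * v (Suc p)) * bvec (n - 1) l"
    proof (rule double_delta[where a = "n - 2" and b = "Suc p"])
      fix i j assume "i < n" "j < n"
      show "u i * v j * cc n p i j l = (if i = n - 2 \<and> j = Suc p then (u (n - 2) * v (Suc p)) * bvec (n - 1) l else 0)"
      proof (cases "i < n - 2 \<or> j < Suc p")
        case True then show ?thesis using assms by auto
      next
        case False
        then have h: "i \<noteq> 0" "j \<noteq> 0" "\<not> i \<le> n - 3" using n4 by arith+
        then have c: "cc n p i j l = (if i = n - 2 \<and> j = Suc p \<and> l = n - 1 then 1 else (0::'a))"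
          by (simp add: cc_def)
        show ?thesis
        proof (cases "i = n - 2 \<and> j = Suc p")
          case True then show ?thesis unfolding c by (simp add: bvec_def)
        next
          case False then show ?thesis unfolding c by auto
        qed
      qed
    qed (use n4 pn in auto)
    then show ?thesis using True by (simp add: amult_def)
  next
    case False
    then have "l \<noteq> n - 1" using n4 by arith
    then show ?thesis using False by (simp add: amult_def bvec_def)
  qed
qed

end



context setting
begin

lemma words_carrier:
  assumes "S \<subseteq> carrier_vs n" "word n (cc n p) S i (w :: nat \<Rightarrow> 'a::field)"
  shows "w \<in> carrier_vs n"
  using assms(2)
proof (induction rule: word.induct)
  case word_one then show ?case using n4 by (simp add: one_e0 bvec_carrier)
next
  case (word_gen s) then show ?case using assms(1) by auto
next
  case (word_mult i a j b) show ?case by (rule amult_carrier)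
qed

lemma upper_bound:
  fixes S :: "(nat \<Rightarrow> 'a::field) set"
  assumes SC: "S \<subseteq> carrier_vs n" and sS: "s \<in> S" and s1: "s 1 \<noteq> 0"
  shows "Lspan n (cc n p) S mm = carrier_vs n"
proof
  let ?L = "Lspan n (cc n p) S mm"
  show "?L \<subseteq> carrier_vs n"
  proof
    fix x assume "x \<in> ?L"
    then show "x \<in> carrier_vs n" unfolding Lspan_def
      by (rule span_carrier[rotated]) (use words_carrier[OF SC] in blast)
  qed
  have e0: "bvec 0 \<in> Lspan n (cc n p) S i" for i
    using word_in_Lspan[OF word.word_one[of n "cc n p" S]] by (simp add: one_e0)
  have sL: "s \<in> Lspan n (cc n p) S 1"
    by (rule word_in_Lspan[OF word.word_gen[OF sS]]) simp
  define t where "t = (\<lambda>k. s k + (- s 0) * bvec 0 k)"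
  have tL: "t \<in> Lspan n (cc n p) S 1"
    using span_add[OF sL[unfolded Lspan_def] span_smult[OF e0[of 1, unfolded Lspan_def], of "- s 0"]]
    unfolding t_def Lspan_def .
  have t0: "t 0 = 0" and t1: "t 1 = s 1" unfolding t_def bvec_def by simp_all
  have sC: "s \<in> carrier_vs n" using SC sS by auto
  have tC: "t \<in> carrier_vs n" using sC unfolding t_def carrier_vs_def bvec_def by auto
  have pwC: "pw n (cc n p) t i \<in> carrier_vs n" for i
    by (cases i) (simp_all add: tC amult_carrier)
  have pwL: "pw n (cc n p) t i \<in> ?L" if "i \<le> n - 3" for i
  proof -
    have "(2::nat) ^ i \<le> 2 ^ (n - 3)" using that by (intro power_increasing) auto
    then have "(2::nat) ^ i \<le> mm" unfolding mm_def by linarith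
    then show ?thesis using pw_Lspan[OF tL, of i] Lspan_mono by blast
  qed
  define a where "a = t 1"
  have a0: "a \<noteq> 0" using s1 t1 a_def by simp
  note supp = pw_support[where t = t, OF t0]
  define u where "u = pw n (cc n p) t (n - 3)"
  define v where "v = pw n (cc n p) t p"
  have u0: "u i = 0" if "i < n - 2" for i
    using supp[of "n - 3"] that n4 unfolding u_def by auto
  have v0: "v j = 0" if "j < Suc p" for j
    using supp[OF pn] that unfolding v_def by auto
  have n32: "Suc (n - 3) = n - 2" using n4 by arith
  have uA: "u (n - 2) = a ^ (2 ^ (n - 3))"
    using supp[of "n - 3"] n32 unfolding u_def a_def by simp
  have vB: "v (Suc p) = a ^ (2 ^ p)"
    using supp[OF pn] unfolding v_def a_def by simp
  define AB where "AB = u (n - 2) * v (Suc p)"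
  have AB0: "AB \<noteq> 0" unfolding AB_def uA vB using a0 by simp
  have "amult n (cc n p) u v \<in> Lspan n (cc n p) S (2 ^ (n - 3) + 2 ^ p)"
    unfolding u_def v_def by (intro Lspan_mult pw_Lspan tL)
  moreover have "amult n (cc n p) u v = (\<lambda>l. AB * bvec (n - 1) l)"
    unfolding AB_def by (rule top_prod[OF u0 v0])
  ultimately have "(\<lambda>l. AB * bvec (n - 1) l) \<in> ?L"
    unfolding mm_def by simp
  from span_smult[OF this[unfolded Lspan_def], of "1 / AB"]
  have top: "bvec (n - 1) \<in> ?L" using AB0 unfolding Lspan_def by simp
  define Q where "Q k = (\<forall>j. k \<le> j \<longrightarrow> j < n \<longrightarrow> bvec j \<in> ?L)" for k
  have "Q 1"
  proof (rule inc_induct[of 1 "n - 1"])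
    show "1 \<le> n - 1" using n4 by simp
    show "Q (n - 1)" unfolding Q_def using top by (metis Suc_pred' dual_order.antisym le0 less_Suc_eq_le n4 not_less_zero zero_less_iff_neq_zero gr_implies_not0)
  next
    fix k assume k1: "1 \<le> k" and kn: "k < n - 1" and QS: "Q (Suc k)"
    obtain i0 where k: "k = Suc i0" using k1 by (cases k) auto
    have i0n: "i0 \<le> n - 3" using kn k by arith
    define x where "x = pw n (cc n p) t i0"
    have xL: "x \<in> ?L" unfolding x_def using pwL[OF i0n] .
    have xC: "x \<in> carrier_vs n" unfolding x_def by (rule pwC)
    have xz: "x l = 0" if "l < k" for l using supp[OF i0n] that k unfolding x_def by auto
    define A where "A = x k"
    have A0: "A \<noteq> 0" using supp[OF i0n] a0 k unfolding A_def x_def a_def by simp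
    define R where "R = (\<lambda>l. (1 / A) * x l + (\<Sum>j\<in>{Suc k..<n}. (- x j / A) * bvec j l))"
    have RL: "R \<in> ?L"
      unfolding R_def Lspan_def
    proof (rule span_add)
      show "(\<lambda>l. 1 / A * x l) \<in> lin_span {w. \<exists>j\<le>mm. word n (cc n p) S j w}"
        using span_smult[OF xL[unfolded Lspan_def]] .
      show "(\<lambda>l. \<Sum>j\<in>{Suc k..<n}. - x j / A * bvec j l) \<in> lin_span {w. \<exists>j\<le>mm. word n (cc n p) S j w}"
        by (rule span_sum) (use QS in \<open>auto simp: Q_def Lspan_def\<close>)
    qed
    have "bvec k = R"
    proof
      fix l
      have "(\<Sum>j\<in>{Suc k..<n}. (- x j / A) * bvec j l) = (\<Sum>j\<in>{Suc k..<n}. (if l = j then - x l / A else 0))"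
        by (rule sum.cong[OF refl]) (simp add: bvec_def)
      also have "\<dots> = (if Suc k \<le> l \<and> l < n then - x l / A else 0)"
        using sum.delta'[of "{Suc k..<n}" l "\<lambda>_. - x l / A"] by simp
      finally have sumeq: "(\<Sum>j\<in>{Suc k..<n}. (- x j / A) * bvec j l) = (if Suc k \<le> l \<and> l < n then - x l / A else 0)" .
      show "bvec k l = R l"
      proof (cases "l < k")
        case True then show ?thesis unfolding R_def sumeq using xz by (simp add: bvec_def)
      next
        case False
        show ?thesis
        proof (cases "l = k")
          case True then show ?thesis unfolding R_def sumeq using A0 by (simp add: bvec_def A_def)
        next
          case False
          then have "k < l" using \<open>\<not> l < k\<close> by simp
          moreover have "l \<ge> n \<Longrightarrow> x l = 0" using xC unfolding carrier_vs_def by auto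
          ultimately show ?thesis unfolding R_def sumeq by (auto simp: bvec_def)
        qed
      qed
    qed
    then have "bvec k \<in> ?L" using RL by simp
    then show "Q k" using QS unfolding Q_def by (metis le_antisym not_less_eq_eq)
  qed
  then have allb: "bvec j \<in> ?L" if "j < n" for j
    using e0 that unfolding Q_def by (cases j) auto
  show "carrier_vs n \<subseteq> ?L"
  proof
    fix x :: "nat \<Rightarrow> 'a" assume xC: "x \<in> carrier_vs n"
    have "x = (\<lambda>l. \<Sum>j<n. x j * bvec j l)"
    proof
      fix l
      have "(\<Sum>j<n. x j * bvec j l) = (\<Sum>j<n. (if l = j then x l else 0))"
        by (rule sum.cong[OF refl]) (simp add: bvec_def)
      also have "\<dots> = (if l < n then x l else 0)"
        using sum.delta'[of "{..<n}" l "\<lambda>_. x l"] by simp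
      also have "\<dots> = x l" using xC by (auto simp: carrier_vs_def)
      finally show "x l = (\<Sum>j<n. x j * bvec j l)" by simp
    qed
    also have "\<dots> \<in> ?L" unfolding Lspan_def
      by (rule span_sum) (use allb in \<open>auto simp: Lspan_def\<close>)
    finally show "x \<in> ?L" .
  qed
qed

end

theorem theorem4p1:
  fixes n p :: nat
  assumes "n > 4" and "p \<le> n - 3"
  shows "\<exists>c :: nat \<Rightarrow> nat \<Rightarrow> nat \<Rightarrow> 'a::field.
           unital n c \<and> alg_length_is n c (2 ^ (n - 3) + 2 ^ p)"
proof -
  interpret setting n p using assms by unfold_locales
  let ?c = "cc n p :: nat \<Rightarrow> nat \<Rightarrow> nat \<Rightarrow> 'a"
  let ?S0 = "{bvec 1 :: nat \<Rightarrow> 'a}"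
  have S0C: "?S0 \<subseteq> carrier_vs n" using assms by (auto intro: bvec_carrier)
  have S0L: "Lspan n ?c ?S0 mm = carrier_vs n"
    by (rule upper_bound[OF S0C, of "bvec 1"]) (auto simp: bvec_def)
  have gen0: "generates n ?c ?S0" unfolding generates_def using S0C S0L by blast
  have len0: "set_length n ?c ?S0 = mm"
    unfolding set_length_def
  proof (rule Least_equality)
    show "Lspan n ?c ?S0 mm = carrier_vs n" by (rule S0L)
    fix k assume "Lspan n ?c ?S0 k = carrier_vs n"
    then show "mm \<le> k" using lower_bound by (meson not_le)
  qed
  have ub: "set_length n ?c S \<le> mm" if g: "generates n ?c S" for S
  proof -
    obtain s where "s \<in> S" "s 1 \<noteq> 0" using gen_coord1[OF g] by blast
    moreover have "S \<subseteq> carrier_vs n" using g unfolding generates_def by blast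
    ultimately have "Lspan n ?c S mm = carrier_vs n" using upper_bound by blast
    then show ?thesis unfolding set_length_def by (rule Least_le)
  qed
  have "unital n ?c \<and> alg_length_is n ?c mm"
    unfolding alg_length_is_def using unital_cc gen0 len0 ub by blast
  then show ?thesis unfolding mm_def by blast
qed


end
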